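(* With $\varepsilon,N,q,P_{(0)},d$ as in the context, assume $0<1-4d^2<1$ and let $\eta>0$ satisfy $\tanh\eta=\sqrt{1-4d^2}$. For real $\theta$ set $$w(\theta)=\frac{\sinh(\eta-\theta)}{\sinh(\eta+\theta)}-1,\qquad \hat R(\theta)=I+w(\theta)P_{(0)}.$$ Then for all real $\theta,\theta'$ with $\eta+\theta,\eta+\theta',\eta+\theta+\theta'\neq0$, $$\hat R_{12}(\theta)\hat R_{23}(\theta+\theta')\hat R_{12}(\theta')=\hat R_{23}(\theta')\hat R_{12}(\theta+\theta')\hat R_{23}(\theta),$$ and $\hat R(\theta)\hat R(-\theta)=I$ whenever both sides are defined. Equivalently, $w$ satisfies $w(\theta+\theta')=\frac{w(\theta)+w(\theta')+w(\theta)w(\theta')}{1-d^2w(\theta)w(\theta')}$.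
   Context: Let $\varepsilon\in\{1,-1\}$, $N\ge 2$ (with $N=2n$ even if $\varepsilon=-1$), $q>0$, $[x]=(q^x-q^{-x})/(q-q^{-1})$ ($[x]=x$ if $q=1$). Define $\rho=(n-\tfrac12,\dots,\tfrac12,0,-\tfrac12,\dots,-n+\tfrac12)$ if $\varepsilon=1,N=2n+1$; $\rho=(n-1,\dots,1,0,0,-1,\dots,-n+1)$ if $\varepsilon=1,N=2n$; $\rho=(n,\dots,1,-1,\dots,-n)$ if $\varepsilon=-1,N=2n$. Let $\epsilon_i=1$ for all $i$ if $\varepsilon=1$; $\epsilon_i=1$ for $i\le n$ and $-1$ for $i>n$ if $\varepsilon=-1$. With $i'=N+1-i$ and matrix units $E_{ij}$, $P_{(0)}=(1+\varepsilon[N-\varepsilon])^{-1}\sum_{i,j}q^{\rho_i-\rho_j}\epsilon_i\epsilon_jE_{i',j}\otimes E_{i,j'}$ on $\mathbb C^N\otimes\mathbb C^N$; $1+\varepsilon[N-\varepsilon]\neq0$ is assumed and $d=(1+\varepsilon[N-\varepsilon])^{-1}$. $A_{12}=A\otimes I$, $A_{23}=I\otimes A$. *)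

theory Defs
  imports "HOL-Analysis.Analysis" "Jordan_Normal_Form.Matrix"
begin

definition qnum :: "real \<Rightarrow> real \<Rightarrow> real" where
  "qnum q x = (if q = 1 then x else (q powr x - q powr (-x)) / (q - q powr (-1)))"

text \<open>The vector rho, indexed by i = 1..N (eps = 1 or -1).\<close>
definition rho :: "int \<Rightarrow> nat \<Rightarrow> nat \<Rightarrow> real" where
  "rho eps N i =
    (let n = N div 2 in
     if eps = 1 \<and> odd N then
       (if i \<le> n then real n + 1/2 - real i
        else if i = n + 1 then 0
        else real n + 3/2 - real i)
     else if eps = 1 then
       (if i \<le> n then real n - real i else real n + 1 - real i)
     else
       (if i \<le> n then real n + 1 - real i else real n - real i))"

definition sgn_eps :: "int \<Rightarrow> nat \<Rightarrow> nat \<Rightarrow> real" where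
  "sgn_eps eps N i = (if eps = 1 then 1 else if i \<le> N div 2 then 1 else -1)"

definition prim :: "nat \<Rightarrow> nat \<Rightarrow> nat" where
  "prim N i = N + 1 - i"

text \<open>Matrix unit E_{ij} on C^N, with 1-based indices i, j in 1..N
  (basis vector e_k is stored at 0-based position k - 1).\<close>
definition matunit :: "nat \<Rightarrow> nat \<Rightarrow> nat \<Rightarrow> complex mat" where
  "matunit N i j = mat N N (\<lambda>(r, c). if r = i - 1 \<and> c = j - 1 then 1 else 0)"

text \<open>Kronecker (tensor) product of matrices; e_a (x) e_b is at position a * dim + b.\<close>
definition kron :: "complex mat \<Rightarrow> complex mat \<Rightarrow> complex mat" where
  "kron A B = mat (dim_row A * dim_row B) (dim_col A * dim_col B)
     (\<lambda>(i, j). A $$ (i div dim_row B, j div dim_col B) * B $$ (i mod dim_row B, j mod dim_col B))"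

definition dcoef :: "int \<Rightarrow> nat \<Rightarrow> real \<Rightarrow> real" where
  "dcoef eps N q = 1 / (1 + real_of_int eps * qnum q (real N - real_of_int eps))"

definition P0 :: "int \<Rightarrow> nat \<Rightarrow> real \<Rightarrow> complex mat" where
  "P0 eps N q = mat (N * N) (N * N) (\<lambda>rc.
     complex_of_real (dcoef eps N q) *
     (\<Sum>i\<in>{1..N}. \<Sum>j\<in>{1..N}.
        complex_of_real (q powr (rho eps N i - rho eps N j) * sgn_eps eps N i * sgn_eps eps N j)
        * kron (matunit N (prim N i) j) (matunit N i (prim N j)) $$ rc))"

definition wfun :: "real \<Rightarrow> real \<Rightarrow> real" where
  "wfun \<eta> \<theta> = sinh (\<eta> - \<theta>) / sinh (\<eta> + \<theta>) - 1"

definition Rhat :: "int \<Rightarrow> nat \<Rightarrow> real \<Rightarrow> real \<Rightarrow> real \<Rightarrow> complex mat" where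
  "Rhat eps N q \<eta> \<theta> = 1\<^sub>m (N * N) + complex_of_real (wfun \<eta> \<theta>) \<cdot>\<^sub>m P0 eps N q"

definition op12 :: "nat \<Rightarrow> complex mat \<Rightarrow> complex mat" where
  "op12 N A = kron A (1\<^sub>m N)"

definition op23 :: "nat \<Rightarrow> complex mat \<Rightarrow> complex mat" where
  "op23 N A = kron (1\<^sub>m N) A"

end

theory Submission
  imports Defs
begin



lemma sum_split_add: fixes m n :: nat shows "(\<Sum>k<m + n. h k) = (\<Sum>k<m. h k) + (\<Sum>j<n. h (m + j))"
  by (induction n) (simp_all add: add.assoc)

lemma sum2: fixes a N :: nat shows "(\<Sum>k<a * N. h k) = (\<Sum>i<a. \<Sum>j<N. h (i * N + j))"
proof (induction a)
  case 0 then show ?case by simp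
next
  case (Suc a)
  have "(\<Sum>k<Suc a * N. h k) = (\<Sum>k<a * N + N. h k)" by (simp add: add.commute)
  also have "\<dots> = (\<Sum>k<a * N. h k) + (\<Sum>j<N. h (a * N + j))" by (rule sum_split_add)
  finally show ?case using Suc by simp
qed

lemma sum3: fixes N :: nat shows "(\<Sum>k<N * N * N. h k) = (\<Sum>s1<N. \<Sum>s2<N. \<Sum>s3<N. h ((s1 * N + s2) * N + s3))"
  by (simp add: sum2)

lemma enc_div: "b < (N::nat) \<Longrightarrow> (a * N + b) div N = a"
  by simp
lemma enc_mod: "b < (N::nat) \<Longrightarrow> (a * N + b) mod N = b"
  by simp

definition M3 :: "nat \<Rightarrow> (nat \<Rightarrow> nat \<Rightarrow> nat \<Rightarrow> nat \<Rightarrow> nat \<Rightarrow> nat \<Rightarrow> complex) \<Rightarrow> complex mat" where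
  "M3 N f = mat (N * N * N) (N * N * N) (\<lambda>(r, c). f (r div N div N) (r div N mod N) (r mod N) (c div N div N) (c div N mod N) (c mod N))"

lemma M3_carrier: "M3 N f \<in> carrier_mat (N * N * N) (N * N * N)"
  unfolding M3_def by simp

lemma lt3: "(r::nat) < N * N * N \<Longrightarrow> r div N div N < N \<and> r div N mod N < N \<and> r mod N < N"
proof -
  assume r: "r < N * N * N"
  then have N: "N > 0" by (cases N) auto
  have "r div N < N * N" using r N by (simp add: div_less_iff_less_mult mult.commute mult.left_commute)
  then have "r div N div N < N" using N by (simp add: div_less_iff_less_mult)
  then show ?thesis using N by simp
qed

lemma M3_mult: "M3 N f * M3 N g = M3 N (\<lambda>r1 r2 r3 c1 c2 c3. \<Sum>s1<N. \<Sum>s2<N. \<Sum>s3<N. f r1 r2 r3 s1 s2 s3 * g s1 s2 s3 c1 c2 c3)"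
proof (rule eq_matI)
  fix i j assume i: "i < dim_row (M3 N (\<lambda>r1 r2 r3 c1 c2 c3. \<Sum>s1<N. \<Sum>s2<N. \<Sum>s3<N. f r1 r2 r3 s1 s2 s3 * g s1 s2 s3 c1 c2 c3))"
    and j: "j < dim_col (M3 N (\<lambda>r1 r2 r3 c1 c2 c3. \<Sum>s1<N. \<Sum>s2<N. \<Sum>s3<N. f r1 r2 r3 s1 s2 s3 * g s1 s2 s3 c1 c2 c3))"
  have i': "i < N * N * N" and j': "j < N * N * N" using i j unfolding M3_def by auto
  have "(M3 N f * M3 N g) $$ (i, j) = (\<Sum>k<N * N * N. M3 N f $$ (i, k) * M3 N g $$ (k, j))"
    using i' j' unfolding M3_def by (simp add: scalar_prod_def lessThan_atLeast0)
  also have "\<dots> = (\<Sum>s1<N. \<Sum>s2<N. \<Sum>s3<N. M3 N f $$ (i, (s1 * N + s2) * N + s3) * M3 N g $$ ((s1 * N + s2) * N + s3, j))"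
    by (rule sum3)
  also have "\<dots> = (\<Sum>s1<N. \<Sum>s2<N. \<Sum>s3<N. f (i div N div N) (i div N mod N) (i mod N) s1 s2 s3 * g s1 s2 s3 (j div N div N) (j div N mod N) (j mod N))"
  proof (intro sum.cong refl)
    fix s1 s2 s3 assume s: "s1 \<in> {..<N}" "s2 \<in> {..<N}" "s3 \<in> {..<N}"
    have k: "(s1 * N + s2) * N + s3 < N * N * N"
    proof -
      have "s1 * N + s2 < N * N"
        using s by (metis lessThan_iff enc_div enc_mod div_less_iff_less_mult mult.commute less_nat_zero_code neq0_conv)
      then have "s1 * N + s2 \<le> N * N - 1" by simp
      then have "(s1 * N + s2) * N + s3 \<le> (N * N - 1) * N + s3" by simp
      also have "\<dots> < N * N * N" using s(3) by (cases "N * N") (auto simp: algebra_simps)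
      finally show ?thesis .
    qed
    show "M3 N f $$ (i, (s1 * N + s2) * N + s3) * M3 N g $$ ((s1 * N + s2) * N + s3, j) =
      f (i div N div N) (i div N mod N) (i mod N) s1 s2 s3 * g s1 s2 s3 (j div N div N) (j div N mod N) (j mod N)"
      using i' j' k s unfolding M3_def by simp
  qed
  finally show "(M3 N f * M3 N g) $$ (i, j) = M3 N (\<lambda>r1 r2 r3 c1 c2 c3. \<Sum>s1<N. \<Sum>s2<N. \<Sum>s3<N. f r1 r2 r3 s1 s2 s3 * g s1 s2 s3 c1 c2 c3) $$ (i, j)"
    using i' j' unfolding M3_def by simp
qed (simp_all add: M3_def)

lemma M3_cong: "(\<And>r1 r2 r3 c1 c2 c3. r1 < N \<Longrightarrow> r2 < N \<Longrightarrow> r3 < N \<Longrightarrow> c1 < N \<Longrightarrow> c2 < N \<Longrightarrow> c3 < N \<Longrightarrow> f r1 r2 r3 c1 c2 c3 = g r1 r2 r3 c1 c2 c3) \<Longrightarrow> M3 N f = M3 N g"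
  unfolding M3_def by (rule eq_matI) (auto dest!: lt3)

lemma M3_smult: "k \<cdot>\<^sub>m M3 N f = M3 N (\<lambda>r1 r2 r3 c1 c2 c3. k * f r1 r2 r3 c1 c2 c3)"
  unfolding M3_def by (rule eq_matI) auto



definition PF :: "nat \<Rightarrow> complex \<Rightarrow> (nat \<Rightarrow> nat \<Rightarrow> complex) \<Rightarrow> (nat \<Rightarrow> nat \<Rightarrow> complex) \<Rightarrow> complex mat" where
  "PF N dl X Y = mat (N * N) (N * N) (\<lambda>(r, c). dl * X (r div N) (r mod N) * Y (c div N) (c mod N))"

lemma PF_carrier: "PF N dl X Y \<in> carrier_mat (N * N) (N * N)"
  unfolding PF_def by simp

lemma lt2: "(r::nat) < N * N \<Longrightarrow> r div N < N \<and> r mod N < N"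
  by (metis less_mult_imp_div_less mod_less_divisor mult_0_right neq0_conv not_less_zero)

lemma ltd: "(i::nat) < N * N * N \<Longrightarrow> i div N < N * N"
  by (rule less_mult_imp_div_less)

lemma modmod1: "(i::nat) mod (N * N) div N = i div N mod N"
proof (cases "N = 0")
  case False
  have "i mod (N * N) = i mod N + N * (i div N mod N)" by (simp add: mod_mult2_eq)
  then show ?thesis using False by simp
qed simp
lemma modmod2: "(i::nat) mod (N * N) mod N = i mod N"
  by (simp add: mod_mult2_eq)

lemma kron_index: "i < dim_row A * dim_row B \<Longrightarrow> j < dim_col A * dim_col B \<Longrightarrow>
  kron A B $$ (i, j) = A $$ (i div dim_row B, j div dim_col B) * B $$ (i mod dim_row B, j mod dim_col B)"
  unfolding kron_def by simp

lemma kron_dim: "dim_row (kron A B) = dim_row A * dim_row B" "dim_col (kron A B) = dim_col A * dim_col B"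
  unfolding kron_def by simp_all

lemma M3_index: "i < N * N * N \<Longrightarrow> j < N * N * N \<Longrightarrow> M3 N f $$ (i, j) = f (i div N div N) (i div N mod N) (i mod N) (j div N div N) (j div N mod N) (j mod N)"
  unfolding M3_def by simp

lemma M3_dim: "dim_row (M3 N f) = N * N * N" "dim_col (M3 N f) = N * N * N"
  unfolding M3_def by simp_all

lemma PF_index: "i < N * N \<Longrightarrow> j < N * N \<Longrightarrow> PF N dl X Y $$ (i, j) = dl * X (i div N) (i mod N) * Y (j div N) (j mod N)"
  unfolding PF_def by simp

lemma PF_dim: "dim_row (PF N dl X Y) = N * N" "dim_col (PF N dl X Y) = N * N"
  unfolding PF_def by simp_all

lemma op12_PF: "op12 N (PF N dl X Y) = M3 N (\<lambda>r1 r2 r3 c1 c2 c3. dl * X r1 r2 * Y c1 c2 * of_bool (r3 = c3))"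
proof (rule eq_matI)
  fix i j assume "i < dim_row (M3 N (\<lambda>r1 r2 r3 c1 c2 c3. dl * X r1 r2 * Y c1 c2 * of_bool (r3 = c3)))"
    "j < dim_col (M3 N (\<lambda>r1 r2 r3 c1 c2 c3. dl * X r1 r2 * Y c1 c2 * of_bool (r3 = c3)))"
  then have i: "i < N * N * N" and j: "j < N * N * N" unfolding M3_dim by auto
  have m: "i mod N < N" "j mod N < N" using lt3[OF i] lt3[OF j] by auto
  have "op12 N (PF N dl X Y) $$ (i, j) = PF N dl X Y $$ (i div N, j div N) * 1\<^sub>m N $$ (i mod N, j mod N)"
    unfolding op12_def using i j by (subst kron_index) (simp_all add: PF_dim)
  also have "\<dots> = dl * X (i div N div N) (i div N mod N) * Y (j div N div N) (j div N mod N) * of_bool (i mod N = j mod N)"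
    by (simp only: PF_index[OF ltd[OF i] ltd[OF j]] index_one_mat(1)[OF m] of_bool_def)
  also have "\<dots> = M3 N (\<lambda>r1 r2 r3 c1 c2 c3. dl * X r1 r2 * Y c1 c2 * of_bool (r3 = c3)) $$ (i, j)"
    by (simp only: M3_index[OF i j])
  finally show "op12 N (PF N dl X Y) $$ (i, j) = M3 N (\<lambda>r1 r2 r3 c1 c2 c3. dl * X r1 r2 * Y c1 c2 * of_bool (r3 = c3)) $$ (i, j)" .
qed (simp_all add: op12_def kron_dim PF_dim M3_dim)

lemma op23_PF: "op23 N (PF N dl X Y) = M3 N (\<lambda>r1 r2 r3 c1 c2 c3. of_bool (r1 = c1) * (dl * X r2 r3 * Y c2 c3))"
proof (rule eq_matI)
  fix i j assume "i < dim_row (M3 N (\<lambda>r1 r2 r3 c1 c2 c3. of_bool (r1 = c1) * (dl * X r2 r3 * Y c2 c3)))"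
    "j < dim_col (M3 N (\<lambda>r1 r2 r3 c1 c2 c3. of_bool (r1 = c1) * (dl * X r2 r3 * Y c2 c3)))"
  then have i: "i < N * N * N" and j: "j < N * N * N" unfolding M3_dim by auto
  then have N: "N > 0" by (cases N) auto
  have "i < N * (N * N)" "j < N * (N * N)" using i j by (simp_all add: mult.assoc)
  then have a: "i div (N * N) < N" "j div (N * N) < N"
    by (simp_all add: less_mult_imp_div_less)
  have b: "i mod (N * N) < N * N" "j mod (N * N) < N * N" using N by simp_all
  have "op23 N (PF N dl X Y) $$ (i, j) = 1\<^sub>m N $$ (i div (N * N), j div (N * N)) * PF N dl X Y $$ (i mod (N * N), j mod (N * N))"
    unfolding op23_def using i j by (subst kron_index) (simp_all add: PF_dim mult.assoc)
  also have "\<dots> = of_bool (i div N div N = j div N div N) * (dl * X (i div N mod N) (i mod N) * Y (j div N mod N) (j mod N))"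
    by (simp only: PF_index[OF b] index_one_mat(1)[OF a]) (simp only: of_bool_def modmod1 modmod2 div_mult2_eq)
  also have "\<dots> = M3 N (\<lambda>r1 r2 r3 c1 c2 c3. of_bool (r1 = c1) * (dl * X r2 r3 * Y c2 c3)) $$ (i, j)"
    by (simp only: M3_index[OF i j])
  finally show "op23 N (PF N dl X Y) $$ (i, j) = M3 N (\<lambda>r1 r2 r3 c1 c2 c3. of_bool (r1 = c1) * (dl * X r2 r3 * Y c2 c3)) $$ (i, j)" .
qed (simp_all add: op23_def kron_dim PF_dim M3_dim mult.assoc)



lemma dsum: fixes a N :: nat shows "a < N \<Longrightarrow> (\<Sum>s<N. of_bool (s = a) * f s) = (f a :: complex)"
proof -
  assume a: "a < N"
  have "(\<Sum>s<N. of_bool (s = a) * f s) = (\<Sum>s\<in>{..<N}. if s = a then f s else 0)"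
    by (rule sum.cong) auto
  also have "\<dots> = f a" using a by (subst sum.delta) auto
  finally show ?thesis .
qed

lemma coll3: fixes c N :: nat shows "c < N \<Longrightarrow> (\<And>s1 s2 s3. T s1 s2 s3 = of_bool (s3 = c) * G s1 s2) \<Longrightarrow>
   (\<Sum>s1<N. \<Sum>s2<N. \<Sum>s3<N. T s1 s2 s3) = (\<Sum>s1<N. \<Sum>s2<N. (G s1 s2 :: complex))"
  by (simp add: dsum)

lemma coll1: fixes c N :: nat shows "c < N \<Longrightarrow> (\<And>s1 s2 s3. T s1 s2 s3 = of_bool (s1 = c) * G s2 s3) \<Longrightarrow>
   (\<Sum>s1<N. \<Sum>s2<N. \<Sum>s3<N. T s1 s2 s3) = (\<Sum>s2<N. \<Sum>s3<N. (G s2 s3 :: complex))"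
  by (simp add: sum_distrib_left[symmetric] dsum)

lemma coll13: fixes a b N :: nat shows "a < N \<Longrightarrow> b < N \<Longrightarrow> (\<And>s1 s2 s3. T s1 s2 s3 = of_bool (s1 = a) * (of_bool (s3 = b) * G s2)) \<Longrightarrow>
   (\<Sum>s1<N. \<Sum>s2<N. \<Sum>s3<N. T s1 s2 s3) = (\<Sum>s2<N. (G s2 :: complex))"
proof -
  assume a: "a < N" and b: "b < N" and T: "\<And>s1 s2 s3. T s1 s2 s3 = of_bool (s1 = a) * (of_bool (s3 = b) * G s2)"
  have "(\<Sum>s1<N. \<Sum>s2<N. \<Sum>s3<N. T s1 s2 s3) = (\<Sum>s2<N. \<Sum>s3<N. of_bool (s3 = b) * G s2)"
    by (rule coll1[OF a]) (rule T)
  also have "\<dots> = (\<Sum>s2<N. G s2)" using b by (simp add: dsum)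
  finally show ?thesis .
qed

lemma tl_sums:
  fixes X Y :: "nat \<Rightarrow> nat \<Rightarrow> complex"
  assumes TL1: "\<And>c r. c < N \<Longrightarrow> r < N \<Longrightarrow> (\<Sum>s<N. Y c s * X s r) = of_bool (r = c)"
    and TL2: "\<And>r c. r < N \<Longrightarrow> c < N \<Longrightarrow> (\<Sum>t<N. Y t c * X r t) = of_bool (r = c)"
    and KP: "dl * (\<Sum>a<N. \<Sum>b<N. Y a b * X a b) = 1"
    and lt: "r1 < N" "r2 < N" "r3 < N" "c1 < N" "c2 < N" "c3 < N"
  shows "(\<Sum>s1<N. \<Sum>s2<N. \<Sum>s3<N. (dl * X r1 r2 * Y s1 s2 * of_bool (r3 = s3)) * (dl * X s1 s2 * Y c1 c2 * of_bool (s3 = c3)))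
       = dl * X r1 r2 * Y c1 c2 * of_bool (r3 = c3)" (is ?S1)
    and "(\<Sum>s1<N. \<Sum>s2<N. \<Sum>s3<N. (of_bool (r1 = s1) * (dl * X r2 r3 * Y s2 s3)) * (of_bool (s1 = c1) * (dl * X s2 s3 * Y c2 c3)))
       = of_bool (r1 = c1) * (dl * X r2 r3 * Y c2 c3)" (is ?S2)
    and "(\<Sum>s1<N. \<Sum>s2<N. \<Sum>s3<N. (dl * X r1 r2 * Y s1 s2 * of_bool (r3 = s3)) * (of_bool (s1 = c1) * (dl * X s2 s3 * Y c2 c3)))
       = dl^2 * X r1 r2 * Y c2 c3 * of_bool (r3 = c1)" (is ?S3)
    and "(\<Sum>s1<N. \<Sum>s2<N. \<Sum>s3<N. (dl^2 * X r1 r2 * Y s2 s3 * of_bool (r3 = s1)) * (dl * X s1 s2 * Y c1 c2 * of_bool (s3 = c3)))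
       = dl^2 * (dl * X r1 r2 * Y c1 c2 * of_bool (r3 = c3))" (is ?S4)
    and "(\<Sum>s1<N. \<Sum>s2<N. \<Sum>s3<N. (of_bool (r1 = s1) * (dl * X r2 r3 * Y s2 s3)) * (dl * X s1 s2 * Y c1 c2 * of_bool (s3 = c3)))
       = dl^2 * X r2 r3 * Y c1 c2 * of_bool (r1 = c3)" (is ?S5)
    and "(\<Sum>s1<N. \<Sum>s2<N. \<Sum>s3<N. (dl^2 * X r2 r3 * Y s1 s2 * of_bool (r1 = s3)) * (of_bool (s1 = c1) * (dl * X s2 s3 * Y c2 c3)))
       = dl^2 * (of_bool (r1 = c1) * (dl * X r2 r3 * Y c2 c3))" (is ?S6)
proof -
  show ?S1
  proof -
    have "(\<Sum>s1<N. \<Sum>s2<N. \<Sum>s3<N. (dl * X r1 r2 * Y s1 s2 * of_bool (r3 = s3)) * (dl * X s1 s2 * Y c1 c2 * of_bool (s3 = c3)))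
      = (\<Sum>s1<N. \<Sum>s2<N. (dl * X r1 r2 * Y c1 c2 * of_bool (r3 = c3)) * (dl * (Y s1 s2 * X s1 s2)))"
      by (rule coll3[OF lt(3)]) (auto simp: mult_ac)
    also have "\<dots> = dl * X r1 r2 * Y c1 c2 * of_bool (r3 = c3)"
      by (simp add: sum_distrib_left[symmetric] KP)
    finally show ?thesis .
  qed
  show ?S2
  proof -
    have "(\<Sum>s1<N. \<Sum>s2<N. \<Sum>s3<N. (of_bool (r1 = s1) * (dl * X r2 r3 * Y s2 s3)) * (of_bool (s1 = c1) * (dl * X s2 s3 * Y c2 c3)))
      = (\<Sum>s2<N. \<Sum>s3<N. (of_bool (r1 = c1) * (dl * X r2 r3 * Y c2 c3)) * (dl * (Y s2 s3 * X s2 s3)))"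
      by (rule coll1[OF lt(4)]) (auto simp: mult_ac)
    also have "\<dots> = of_bool (r1 = c1) * (dl * X r2 r3 * Y c2 c3)"
      by (simp add: sum_distrib_left[symmetric] KP)
    finally show ?thesis .
  qed
  show ?S3
  proof -
    have "(\<Sum>s1<N. \<Sum>s2<N. \<Sum>s3<N. (dl * X r1 r2 * Y s1 s2 * of_bool (r3 = s3)) * (of_bool (s1 = c1) * (dl * X s2 s3 * Y c2 c3)))
      = (\<Sum>s2<N. dl^2 * X r1 r2 * Y c2 c3 * (Y c1 s2 * X s2 r3))"
      by (rule coll13[OF lt(4) lt(3)]) (auto simp: mult_ac power2_eq_square)
    also have "\<dots> = dl^2 * X r1 r2 * Y c2 c3 * of_bool (r3 = c1)"
      by (simp add: sum_distrib_left[symmetric] TL1 lt)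
    finally show ?thesis .
  qed
  show ?S4
  proof -
    have "(\<Sum>s1<N. \<Sum>s2<N. \<Sum>s3<N. (dl^2 * X r1 r2 * Y s2 s3 * of_bool (r3 = s1)) * (dl * X s1 s2 * Y c1 c2 * of_bool (s3 = c3)))
      = (\<Sum>s2<N. dl^2 * (dl * X r1 r2 * Y c1 c2) * (Y s2 c3 * X r3 s2))"
      by (rule coll13[OF lt(3) lt(6)]) (auto simp: mult_ac)
    also have "\<dots> = dl^2 * (dl * X r1 r2 * Y c1 c2 * of_bool (r3 = c3))"
      by (simp add: sum_distrib_left[symmetric] TL2 lt)
    finally show ?thesis .
  qed
  show ?S5
  proof -
    have "(\<Sum>s1<N. \<Sum>s2<N. \<Sum>s3<N. (of_bool (r1 = s1) * (dl * X r2 r3 * Y s2 s3)) * (dl * X s1 s2 * Y c1 c2 * of_bool (s3 = c3)))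
      = (\<Sum>s2<N. dl^2 * X r2 r3 * Y c1 c2 * (Y s2 c3 * X r1 s2))"
      by (rule coll13[OF lt(1) lt(6)]) (auto simp: mult_ac power2_eq_square)
    also have "\<dots> = dl^2 * X r2 r3 * Y c1 c2 * of_bool (r1 = c3)"
      by (simp add: sum_distrib_left[symmetric] TL2 lt)
    finally show ?thesis .
  qed
  show ?S6
  proof -
    have "(\<Sum>s1<N. \<Sum>s2<N. \<Sum>s3<N. (dl^2 * X r2 r3 * Y s1 s2 * of_bool (r1 = s3)) * (of_bool (s1 = c1) * (dl * X s2 s3 * Y c2 c3)))
      = (\<Sum>s2<N. dl^2 * (dl * X r2 r3 * Y c2 c3) * (Y c1 s2 * X s2 r1))"
      by (rule coll13[OF lt(4) lt(1)]) (auto simp: mult_ac)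
    also have "\<dots> = dl^2 * (of_bool (r1 = c1) * (dl * X r2 r3 * Y c2 c3))"
      by (simp add: sum_distrib_left[symmetric] TL1 lt)
    finally show ?thesis .
  qed
qed


lemma qnz: fixes q :: real assumes q: "q > 0" and q1: "q \<noteq> 1" shows "q - q powr -1 \<noteq> 0"
proof
  assume "q - q powr -1 = 0"
  then have "q = inverse q" using q by (simp add: powr_minus)
  then have "q * q = 1" using q by (metis right_inverse less_irrefl)
  then have "(q - 1) * (q + 1) = 0" by (simp add: algebra_simps)
  then show False using q q1 by simp
qed

lemma fin: "(D::real) \<noteq> 0 \<Longrightarrow> D * S1 = u \<Longrightarrow> D * S2 = v \<Longrightarrow> S1 + S2 = (u + v) / D"
  by (simp add: field_simps)

lemma geom:
  fixes q c :: real assumes q: "q > 0"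
  shows "(q - q powr -1) * (\<Sum>k<m. q powr (c + 2 * real k)) = q powr (c + 2 * real m - 1) - q powr (c - 1)"
proof (induction m)
  case 0 then show ?case by simp
next
  case (Suc m)
  have a0: "q powr (c + 2 * real (Suc m) - 1) = q powr 1 * q powr (c + 2 * real m)"
    unfolding powr_add[symmetric] by (simp add: algebra_simps)
  have a: "q * q powr (c + 2 * real m) = q powr (c + 2 * real (Suc m) - 1)"
    unfolding a0 using q by simp
  have b: "q powr -1 * q powr (c + 2 * real m) = q powr (c + 2 * real m - 1)"
    unfolding powr_add[symmetric] by (simp add: algebra_simps)
  have "(q - q powr -1) * (\<Sum>k<Suc m. q powr (c + 2 * real k))
     = (q - q powr -1) * (\<Sum>k<m. q powr (c + 2 * real k)) + (q * q powr (c + 2 * real m) - q powr -1 * q powr (c + 2 * real m))"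
    by (simp add: algebra_simps)
  also have "\<dots> = q powr (c + 2 * real (Suc m) - 1) - q powr (c - 1)"
    unfolding Suc a b by simp
  finally show ?case .
qed

definition gq :: "int \<Rightarrow> nat \<Rightarrow> real \<Rightarrow> nat \<Rightarrow> real" where
  "gq eps N q a = q powr (- rho eps N (a + 1)) * sgn_eps eps N (a + 1) * (q powr (rho eps N (N - a)) * sgn_eps eps N (N - a))"



lemma qdimA:
  fixes q :: real assumes q: "q > 0" and N: "N = 2 * n + 1"
  shows "(\<Sum>a<N. gq 1 N q a) = 1 + qnum q (real N - 1)"
proof -
  have Nd: "N div 2 = n" "odd N" using N by auto
  have s: "(\<Sum>a<N. gq 1 N q a) = (\<Sum>a<n. gq 1 N q a) + gq 1 N q n + (\<Sum>j<n. gq 1 N q (n + 1 + j))"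
  proof -
    have "N = n + (1 + n)" using N by simp
    then have "(\<Sum>a<N. gq 1 N q a) = (\<Sum>a<n. gq 1 N q a) + (\<Sum>j<1 + n. gq 1 N q (n + j))"
      using sum_split_add by metis
    also have "(\<Sum>j<1 + n. gq 1 N q (n + j)) = gq 1 N q n + (\<Sum>j<n. gq 1 N q (n + (1 + j)))"
      using sum_split_add[of "\<lambda>j. gq 1 N q (n + j)" 1 n] by simp
    finally show ?thesis by (simp add: add.assoc)
  qed
  have p1: "(\<Sum>a<n. gq 1 N q a) = (\<Sum>a<n. q powr ((1 - 2 * real n) + 2 * real a))"
  proof (rule sum.cong[OF refl])
    fix a assume "a \<in> {..<n}"
    then have a: "a < n" by simp
    have f: "a + 1 \<le> n" "\<not> N - a \<le> n" "N - a \<noteq> n + 1" "a \<le> N" using a N by arith+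
    have e: "- rho 1 N (a + 1) + rho 1 N (N - a) = (1 - 2 * real n) + 2 * real a"
      using f unfolding rho_def Nd Let_def by (simp add: N of_nat_diff)
    show "gq 1 N q a = q powr ((1 - 2 * real n) + 2 * real a)"
      unfolding gq_def sgn_eps_def using e by (simp add: powr_add[symmetric])
  qed
  have p2: "gq 1 N q n = 1"
  proof -
    have e: "- rho 1 N (n + 1) + rho 1 N (N - n) = 0"
      unfolding rho_def Nd Let_def by (simp add: N)
    show ?thesis unfolding gq_def sgn_eps_def using e q by (simp add: powr_add[symmetric])
  qed
  have p3: "(\<Sum>j<n. gq 1 N q (n + 1 + j)) = (\<Sum>j<n. q powr (1 + 2 * real j))"
  proof (rule sum.cong[OF refl])
    fix j assume "j \<in> {..<n}"
    then have j: "j < n" by simp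
    have f: "\<not> n + 1 + j + 1 \<le> n" "n + 1 + j + 1 \<noteq> n + 1" "N - (n + 1 + j) \<le> n" "n + 1 + j \<le> N" using j N by arith+
    have e: "- rho 1 N (n + 1 + j + 1) + rho 1 N (N - (n + 1 + j)) = 1 + 2 * real j"
      using f unfolding rho_def Nd Let_def by (simp add: N of_nat_diff)
    show "gq 1 N q (n + 1 + j) = q powr (1 + 2 * real j)"
      unfolding gq_def sgn_eps_def using e by (simp add: powr_add[symmetric])
  qed
  have RN: "real N - 1 = 2 * real n" using N by simp
  show ?thesis
  proof (cases "q = 1")
    case True
    then show ?thesis unfolding s p1 p2 p3 RN qnum_def by simp
  next
    case False
    have nz: "q - q powr -1 \<noteq> 0" by (rule qnz[OF q False])
    define D where "D = q - q powr -1"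
    have q0: "q powr 0 = 1" using q by simp
    have x1: "(1 - 2 * real n) + 2 * real n - 1 = 0" "(1 - 2 * real n) - 1 = - (2 * real n)"
      "1 + 2 * real n - 1 = 2 * real n" "(1::real) - 1 = 0" by simp_all
    have g1: "D * (\<Sum>a<n. q powr ((1 - 2 * real n) + 2 * real a)) = 1 - q powr (- (2 * real n))"
      using geom[OF q, of "1 - 2 * real n" n] unfolding D_def x1 q0 .
    have g2: "D * (\<Sum>j<n. q powr (1 + 2 * real j)) = q powr (2 * real n) - 1"
      using geom[OF q, of 1 n] unfolding D_def x1 q0 .
    have f: "(\<Sum>a<n. q powr ((1 - 2 * real n) + 2 * real a)) + (\<Sum>j<n. q powr (1 + 2 * real j))
        = ((1 - q powr (- (2 * real n))) + (q powr (2 * real n) - 1)) / D"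
      by (rule fin) (use nz g1 g2 D_def in auto)
    have qn: "qnum q (real N - 1) = (q powr (2 * real n) - q powr (- (2 * real n))) / D"
      unfolding RN qnum_def D_def using False by simp
    show ?thesis unfolding s p1 p2 p3 qn using f by (simp add: algebra_simps)
  qed
qed



lemma qdimB:
  fixes q :: real assumes q: "q > 0" and N: "N = 2 * n"
  shows "(\<Sum>a<N. gq 1 N q a) = 1 + qnum q (real N - 1)"
proof -
  have Nd: "N div 2 = n" "\<not> odd N" using N by auto
  have s: "(\<Sum>a<N. gq 1 N q a) = (\<Sum>a<n. gq 1 N q a) + (\<Sum>j<n. gq 1 N q (n + j))"
    using sum_split_add[of "gq 1 N q" n n] N by (simp add: mult_2)
  have p1: "(\<Sum>a<n. gq 1 N q a) = (\<Sum>a<n. q powr ((2 - 2 * real n) + 2 * real a))"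
  proof (rule sum.cong[OF refl])
    fix a assume "a \<in> {..<n}"
    then have a: "a < n" by simp
    have f: "a + 1 \<le> n" "\<not> N - a \<le> n" "a \<le> N" using a N by arith+
    have e: "- rho 1 N (a + 1) + rho 1 N (N - a) = (2 - 2 * real n) + 2 * real a"
      using f unfolding rho_def Nd Let_def by (simp add: N of_nat_diff)
    show "gq 1 N q a = q powr ((2 - 2 * real n) + 2 * real a)"
      unfolding gq_def sgn_eps_def using e by (simp add: powr_add[symmetric])
  qed
  have p3: "(\<Sum>j<n. gq 1 N q (n + j)) = (\<Sum>j<n. q powr (0 + 2 * real j))"
  proof (rule sum.cong[OF refl])
    fix j assume "j \<in> {..<n}"
    then have j: "j < n" by simp
    have f: "\<not> n + j + 1 \<le> n" "N - (n + j) \<le> n" "n + j \<le> N" using j N by arith+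
    have e: "- rho 1 N (n + j + 1) + rho 1 N (N - (n + j)) = 0 + 2 * real j"
      using f unfolding rho_def Nd Let_def by (simp add: N of_nat_diff)
    show "gq 1 N q (n + j) = q powr (0 + 2 * real j)"
      unfolding gq_def sgn_eps_def using e by (simp add: powr_add[symmetric])
  qed
  have RN: "real N - 1 = 2 * real n - 1" using N by simp
  show ?thesis
  proof (cases "q = 1")
    case True
    then show ?thesis unfolding s p1 p3 RN qnum_def by simp
  next
    case False
    have nz: "q - q powr -1 \<noteq> 0" by (rule qnz[OF q False])
    define D where "D = q - q powr -1"
    have q1: "q powr 1 = q" using q by simp
    have x1: "(2 - 2 * real n) + 2 * real n - 1 = 1" "(2 - 2 * real n) - 1 = 1 - 2 * real n"
      "0 + 2 * real n - 1 = 2 * real n - 1" "(0::real) - 1 = -1" by simp_all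
    have g1: "D * (\<Sum>a<n. q powr ((2 - 2 * real n) + 2 * real a)) = q - q powr (1 - 2 * real n)"
      using geom[OF q, of "2 - 2 * real n" n] unfolding D_def x1 q1 .
    have g2: "D * (\<Sum>j<n. q powr (0 + 2 * real j)) = q powr (2 * real n - 1) - q powr -1"
      using geom[OF q, of 0 n] unfolding D_def x1 .
    have f: "(\<Sum>a<n. q powr ((2 - 2 * real n) + 2 * real a)) + (\<Sum>j<n. q powr (0 + 2 * real j))
        = ((q - q powr (1 - 2 * real n)) + (q powr (2 * real n - 1) - q powr -1)) / D"
      by (rule fin) (use nz g1 g2 D_def in auto)
    have x2: "- (2 * real n - 1) = 1 - 2 * real n" by simp
    have qn: "qnum q (real N - 1) = (q powr (2 * real n - 1) - q powr (1 - 2 * real n)) / D"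
      unfolding RN qnum_def D_def x2 using False by simp
    have "((q - q powr (1 - 2 * real n)) + (q powr (2 * real n - 1) - q powr -1)) / D
        = D / D + (q powr (2 * real n - 1) - q powr (1 - 2 * real n)) / D"
    proof -
      have "(q - q powr (1 - 2 * real n)) + (q powr (2 * real n - 1) - q powr -1) = D + (q powr (2 * real n - 1) - q powr (1 - 2 * real n))"
        unfolding D_def by linarith
      then show ?thesis by (simp only: add_divide_distrib)
    qed
    also have "D / D = 1" using nz D_def by simp
    finally show ?thesis unfolding s p1 p3 qn using f by simp
  qed
qed



lemma qdimC:
  fixes q :: real assumes q: "q > 0" and N: "N = 2 * n"
  shows "(\<Sum>a<N. gq (-1) N q a) = 1 - qnum q (real N + 1)"
proof -
  have Nd: "N div 2 = n" using N by auto
  have s: "(\<Sum>a<N. gq (-1) N q a) = (\<Sum>a<n. gq (-1) N q a) + (\<Sum>j<n. gq (-1) N q (n + j))"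
    using sum_split_add[of "gq (-1) N q" n n] N by (simp add: mult_2)
  have p1: "(\<Sum>a<n. gq (-1) N q a) = - (\<Sum>a<n. q powr ((- 2 * real n) + 2 * real a))"
    unfolding sum_negf[symmetric]
  proof (rule sum.cong[OF refl])
    fix a assume "a \<in> {..<n}"
    then have a: "a < n" by simp
    have f: "a + 1 \<le> n" "\<not> N - a \<le> n" "a \<le> N" using a N by arith+
    have e: "- rho (-1) N (a + 1) + rho (-1) N (N - a) = (- 2 * real n) + 2 * real a"
      using f unfolding rho_def Nd Let_def by (simp add: N of_nat_diff)
    show "gq (-1) N q a = - (q powr ((- 2 * real n) + 2 * real a))"
      unfolding gq_def sgn_eps_def using e f Nd by (simp add: powr_add[symmetric])
  qed
  have p3: "(\<Sum>j<n. gq (-1) N q (n + j)) = - (\<Sum>j<n. q powr (2 + 2 * real j))"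
    unfolding sum_negf[symmetric]
  proof (rule sum.cong[OF refl])
    fix j assume "j \<in> {..<n}"
    then have j: "j < n" by simp
    have f: "\<not> n + j + 1 \<le> n" "N - (n + j) \<le> n" "n + j \<le> N" using j N by arith+
    have e: "- rho (-1) N (n + j + 1) + rho (-1) N (N - (n + j)) = 2 + 2 * real j"
      using f unfolding rho_def Nd Let_def by (simp add: N of_nat_diff)
    show "gq (-1) N q (n + j) = - (q powr (2 + 2 * real j))"
      unfolding gq_def sgn_eps_def using e f Nd by (simp add: powr_add[symmetric])
  qed
  have RN: "real N + 1 = 2 * real n + 1" using N by simp
  show ?thesis
  proof (cases "q = 1")
    case True
    then show ?thesis unfolding s p1 p3 RN qnum_def by simp
  next
    case False
    have nz: "q - q powr -1 \<noteq> 0" by (rule qnz[OF q False])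
    define D where "D = q - q powr -1"
    have q1: "q powr 1 = q" using q by simp
    have x1: "(- 2 * real n) + 2 * real n - 1 = -1" "(- 2 * real n) - 1 = - (2 * real n + 1)"
      "2 + 2 * real n - 1 = 2 * real n + 1" "(2::real) - 1 = 1" by simp_all
    have g1: "D * (\<Sum>a<n. q powr ((- 2 * real n) + 2 * real a)) = q powr -1 - q powr (- (2 * real n + 1))"
      using geom[OF q, of "- 2 * real n" n] unfolding D_def x1 .
    have g2: "D * (\<Sum>j<n. q powr (2 + 2 * real j)) = q powr (2 * real n + 1) - q"
      using geom[OF q, of 2 n] unfolding D_def x1 q1 .
    have f: "(\<Sum>a<n. q powr ((- 2 * real n) + 2 * real a)) + (\<Sum>j<n. q powr (2 + 2 * real j))
        = ((q powr -1 - q powr (- (2 * real n + 1))) + (q powr (2 * real n + 1) - q)) / D"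
      by (rule fin) (use nz g1 g2 D_def in auto)
    have qn: "qnum q (real N + 1) = (q powr (2 * real n + 1) - q powr (- (2 * real n + 1))) / D"
      unfolding RN qnum_def D_def using False by simp
    have "((q powr -1 - q powr (- (2 * real n + 1))) + (q powr (2 * real n + 1) - q)) / D
        = (q powr (2 * real n + 1) - q powr (- (2 * real n + 1))) / D - D / D"
    proof -
      have "(q powr -1 - q powr (- (2 * real n + 1))) + (q powr (2 * real n + 1) - q) = (q powr (2 * real n + 1) - q powr (- (2 * real n + 1))) - D"
        unfolding D_def by linarith
      then show ?thesis by (simp only: diff_divide_distrib)
    qed
    also have "D / D = 1" using nz D_def by simp
    finally have "(\<Sum>a<n. q powr ((- 2 * real n) + 2 * real a)) + (\<Sum>j<n. q powr (2 + 2 * real j)) = qnum q (real N + 1) - 1"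
      using f qn by simp
    then show ?thesis unfolding s p1 p3 by simp
  qed
qed


definition al :: "int \<Rightarrow> nat \<Rightarrow> real \<Rightarrow> nat \<Rightarrow> complex" where
  "al eps N q k = complex_of_real (q powr rho eps N (k + 1) * sgn_eps eps N (k + 1))"
definition be :: "int \<Rightarrow> nat \<Rightarrow> real \<Rightarrow> nat \<Rightarrow> complex" where
  "be eps N q k = complex_of_real (q powr (- rho eps N (k + 1)) * sgn_eps eps N (k + 1))"
definition XX :: "int \<Rightarrow> nat \<Rightarrow> real \<Rightarrow> nat \<Rightarrow> nat \<Rightarrow> complex" where
  "XX eps N q a b = of_bool (a + b = N - 1) * al eps N q b"
definition YY :: "int \<Rightarrow> nat \<Rightarrow> real \<Rightarrow> nat \<Rightarrow> nat \<Rightarrow> complex" where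
  "YY eps N q a b = of_bool (a + b = N - 1) * be eps N q a"

lemma sgn_sq: "sgn_eps eps N i * sgn_eps eps N i = 1"
  unfolding sgn_eps_def by auto

lemma albe: assumes q: "q > 0" shows "be eps N q k * al eps N q k = 1"
proof -
  have "q powr (- rho eps N (k + 1)) * q powr (rho eps N (k + 1)) = 1"
    using q by (simp add: powr_add[symmetric])
  then have "(q powr (- rho eps N (k + 1)) * sgn_eps eps N (k + 1)) * (q powr rho eps N (k + 1) * sgn_eps eps N (k + 1)) = 1"
    using sgn_sq[of eps N "k + 1"] by (simp add: algebra_simps)
  then show ?thesis unfolding al_def be_def by (metis of_real_1 of_real_mult)
qed

lemma dsumS: "finite S \<Longrightarrow> a \<in> S \<Longrightarrow> (\<Sum>s\<in>S. of_bool (s = a) * f s) = (f a :: complex)"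
proof -
  assume S: "finite S" and a: "a \<in> S"
  have "(\<Sum>s\<in>S. of_bool (s = a) * f s) = (\<Sum>s\<in>S. if s = a then f s else 0)"
    by (rule sum.cong) auto
  also have "\<dots> = f a" using S a by (subst sum.delta) auto
  finally show ?thesis .
qed

lemma TL1_XY: assumes q: "q > 0" and N: "N > 0"
  shows "\<And>c r. c < N \<Longrightarrow> r < N \<Longrightarrow> (\<Sum>s<N. YY eps N q c s * XX eps N q s r) = of_bool (r = c)"
proof -
  fix c r assume c: "c < N" and r: "r < N"
  have "(\<Sum>s<N. YY eps N q c s * XX eps N q s r) = (\<Sum>s<N. of_bool (s = N - 1 - c) * (of_bool (r = c) * (be eps N q c * al eps N q r)))"
    unfolding YY_def XX_def using c r by (intro sum.cong refl) auto
  also have "\<dots> = of_bool (r = c) * (be eps N q c * al eps N q r)" using c by (simp add: dsum)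
  also have "\<dots> = of_bool (r = c)" using albe[OF q] by auto
  finally show "(\<Sum>s<N. YY eps N q c s * XX eps N q s r) = of_bool (r = c)" .
qed

lemma TL2_XY: assumes q: "q > 0" and N: "N > 0"
  shows "\<And>r c. r < N \<Longrightarrow> c < N \<Longrightarrow> (\<Sum>t<N. YY eps N q t c * XX eps N q r t) = of_bool (r = c)"
proof -
  fix c r assume c: "c < N" and r: "r < N"
  have "(\<Sum>t<N. YY eps N q t c * XX eps N q r t) = (\<Sum>t<N. of_bool (t = N - 1 - c) * (of_bool (r = c) * (be eps N q t * al eps N q t)))"
    unfolding YY_def XX_def using c r by (intro sum.cong refl) auto
  also have "\<dots> = of_bool (r = c) * (be eps N q (N - 1 - c) * al eps N q (N - 1 - c))" using c by (simp add: dsum)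
  also have "\<dots> = of_bool (r = c)" using albe[OF q] by auto
  finally show "(\<Sum>t<N. YY eps N q t c * XX eps N q r t) = of_bool (r = c)" .
qed

lemma KP_sum: assumes q: "q > 0" and N: "N > 0"
  shows "(\<Sum>a<N. \<Sum>b<N. YY eps N q a b * XX eps N q a b) = complex_of_real (\<Sum>a<N. gq eps N q a)"
proof -
  have "(\<Sum>a<N. \<Sum>b<N. YY eps N q a b * XX eps N q a b) = (\<Sum>a<N. complex_of_real (gq eps N q a))"
  proof (rule sum.cong[OF refl])
    fix a assume "a \<in> {..<N}"
    then have a: "a < N" by simp
    have "(\<Sum>b<N. YY eps N q a b * XX eps N q a b) = (\<Sum>b<N. of_bool (b = N - 1 - a) * (be eps N q a * al eps N q b))"
      unfolding YY_def XX_def using a by (intro sum.cong refl) auto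
    also have "\<dots> = be eps N q a * al eps N q (N - 1 - a)" using a by (simp add: dsum)
    also have "\<dots> = complex_of_real (gq eps N q a)"
    proof -
      have "N - 1 - a + 1 = N - a" using a by simp
      then show ?thesis unfolding al_def be_def gq_def by (simp add: algebra_simps)
    qed
    finally show "(\<Sum>b<N. YY eps N q a b * XX eps N q a b) = complex_of_real (gq eps N q a)" .
  qed
  then show ?thesis by simp
qed

lemma qdim_all:
  assumes q: "q > 0" and eps: "eps = 1 \<or> eps = -1" and Neven: "eps = -1 \<Longrightarrow> even N"
  shows "(\<Sum>a<N. gq eps N q a) = 1 + real_of_int eps * qnum q (real N - real_of_int eps)"
proof (cases "eps = 1")
  case True
  show ?thesis
  proof (cases "odd N")
    case True
    then obtain n where "N = 2 * n + 1" using oddE by blast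
    then show ?thesis using qdimA[OF q] \<open>eps = 1\<close> by simp
  next
    case False
    then obtain n where "N = 2 * n" by blast
    then show ?thesis using qdimB[OF q] \<open>eps = 1\<close> by simp
  qed
next
  case False
  then have e: "eps = -1" using eps by simp
  then obtain n where "N = 2 * n" using Neven by blast
  then show ?thesis using qdimC[OF q] e by simp
qed

lemma matunit_index: "a < N \<Longrightarrow> b < N \<Longrightarrow> matunit N i j $$ (a, b) = (if a = i - 1 \<and> b = j - 1 then 1 else 0)"
  unfolding matunit_def by simp

lemma matunit_dim: "dim_row (matunit N i j) = N" "dim_col (matunit N i j) = N"
  unfolding matunit_def by simp_all

lemma aux1: "(b::nat) < N \<Longrightarrow> (a = N + 1 - (b + 1) - 1) = (a + b = N - 1)" by arith
lemma aux2: "(a::nat) < N \<Longrightarrow> (b = N + 1 - (a + 1) - 1) = (a + b = N - 1)" by arith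

lemma P0_PF: "P0 eps N q = PF N (complex_of_real (dcoef eps N q)) (XX eps N q) (YY eps N q)"
proof (rule eq_matI)
  fix r c assume "r < dim_row (PF N (complex_of_real (dcoef eps N q)) (XX eps N q) (YY eps N q))"
    "c < dim_col (PF N (complex_of_real (dcoef eps N q)) (XX eps N q) (YY eps N q))"
  then have r: "r < N * N" and c: "c < N * N" unfolding PF_dim by auto
  have r1: "r div N < N" "r mod N < N" using lt2[OF r] by auto
  have c1: "c div N < N" "c mod N < N" using lt2[OF c] by auto
  define cf where "cf i j = complex_of_real (q powr (rho eps N i - rho eps N j) * sgn_eps eps N i * sgn_eps eps N j)" for i j
  define K where "K = cf (r mod N + 1) (c div N + 1) * of_bool (r div N + r mod N = N - 1) * of_bool (c div N + c mod N = N - 1)"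
  have "(\<Sum>i\<in>{1..N}. \<Sum>j\<in>{1..N}. cf i j * kron (matunit N (prim N i) j) (matunit N i (prim N j)) $$ (r, c))
      = (\<Sum>i\<in>{1..N}. \<Sum>j\<in>{1..N}. of_bool (i = r mod N + 1) * (of_bool (j = c div N + 1) * K))"
  proof (intro sum.cong refl)
    fix i j assume i: "i \<in> {1..N}" and j: "j \<in> {1..N}"
    have k: "kron (matunit N (prim N i) j) (matunit N i (prim N j)) $$ (r, c)
       = (if r div N = prim N i - 1 \<and> c div N = j - 1 then 1 else 0) * (if r mod N = i - 1 \<and> c mod N = prim N j - 1 then 1 else 0)"
      using r c by (simp only: kron_index matunit_dim matunit_index[OF r1(1) c1(1)] matunit_index[OF r1(2) c1(2)])
    show "cf i j * kron (matunit N (prim N i) j) (matunit N i (prim N j)) $$ (r, c) =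
       of_bool (i = r mod N + 1) * (of_bool (j = c div N + 1) * K)"
    proof (cases "i = r mod N + 1 \<and> j = c div N + 1")
      case True
      have e1: "(r div N = prim N (r mod N + 1) - 1) = (r div N + r mod N = N - 1)" unfolding prim_def by (rule aux1[OF r1(2)])
      have e2: "(c mod N = prim N (c div N + 1) - 1) = (c div N + c mod N = N - 1)" unfolding prim_def by (rule aux2[OF c1(1)])
      from True have ii: "i = r mod N + 1" and jj: "j = c div N + 1" by auto
      show ?thesis unfolding k K_def by (simp only: ii jj e1 e2) simp
    next
      case False
      then have "r mod N \<noteq> i - 1 \<or> c div N \<noteq> j - 1" using i j by auto
      then show ?thesis unfolding k using False by auto
    qed
  qed
  also have "\<dots> = (\<Sum>i\<in>{1..N}. of_bool (i = r mod N + 1) * (\<Sum>j\<in>{1..N}. of_bool (j = c div N + 1) * K))"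
    by (simp only: sum_distrib_left)
  also have "\<dots> = K"
  proof -
    have a: "r mod N + 1 \<in> {1..N}" "c div N + 1 \<in> {1..N}" using Suc_leI[OF r1(2)] Suc_leI[OF c1(1)] by auto
    have i1: "(\<Sum>j\<in>{1..N}. of_bool (j = c div N + 1) * K) = K"
      by (rule dsumS[OF _ a(2), of "\<lambda>_. K"]) simp
    have i2: "(\<Sum>i\<in>{1..N}. of_bool (i = r mod N + 1) * K) = K"
      by (rule dsumS[OF _ a(1), of "\<lambda>_. K"]) simp
    show ?thesis by (simp only: i1 i2)
  qed
  also have "K = XX eps N q (r div N) (r mod N) * YY eps N q (c div N) (c mod N)"
  proof -
    have "q powr (rho eps N (r mod N + 1) - rho eps N (c div N + 1)) = q powr (rho eps N (r mod N + 1)) * q powr (- rho eps N (c div N + 1))"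
      by (simp add: powr_add[symmetric])
    then show ?thesis unfolding K_def cf_def XX_def YY_def al_def be_def by (simp add: algebra_simps)
  qed
  finally have "(\<Sum>i\<in>{1..N}. \<Sum>j\<in>{1..N}. cf i j * kron (matunit N (prim N i) j) (matunit N i (prim N j)) $$ (r, c))
      = XX eps N q (r div N) (r mod N) * YY eps N q (c div N) (c mod N)" .
  then show "P0 eps N q $$ (r, c) = PF N (complex_of_real (dcoef eps N q)) (XX eps N q) (YY eps N q) $$ (r, c)"
    unfolding P0_def PF_index[OF r c] using r c unfolding cf_def by (simp add: mult.assoc)
qed (simp_all only: P0_def PF_dim dim_row_mat dim_col_mat)




lemma div_mod_eq_iff: "((i::nat) div M = j div M \<and> i mod M = j mod M) \<longleftrightarrow> i = j"
  by (metis div_mult_mod_eq)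

lemma op12_R: assumes P: "P \<in> carrier_mat (N * N) (N * N)"
  shows "op12 N (1\<^sub>m (N * N) + w \<cdot>\<^sub>m P) = 1\<^sub>m (N * N * N) + w \<cdot>\<^sub>m op12 N P"
proof (rule eq_matI)
  fix i j assume "i < dim_row (1\<^sub>m (N * N * N) + w \<cdot>\<^sub>m op12 N P)" "j < dim_col (1\<^sub>m (N * N * N) + w \<cdot>\<^sub>m op12 N P)"
  then have i: "i < N * N * N" and j: "j < N * N * N" using P unfolding op12_def kron_def by auto
  then have N: "N > 0" by (cases N) auto
  have e: "(if i div N = j div N then 1 else 0) * (if i mod N = j mod N then 1 else 0) = (if i = j then 1 else (0::complex))"
    using div_mod_eq_iff[of i N j] by auto
  show "op12 N (1\<^sub>m (N * N) + w \<cdot>\<^sub>m P) $$ (i, j) = (1\<^sub>m (N * N * N) + w \<cdot>\<^sub>m op12 N P) $$ (i, j)"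
    using i j ltd[OF i] ltd[OF j] N P e unfolding op12_def kron_def by (simp add: algebra_simps)
qed (use P in \<open>simp_all add: op12_def kron_def\<close>)

lemma op23_R: assumes P: "P \<in> carrier_mat (N * N) (N * N)"
  shows "op23 N (1\<^sub>m (N * N) + w \<cdot>\<^sub>m P) = 1\<^sub>m (N * N * N) + w \<cdot>\<^sub>m op23 N P"
proof (rule eq_matI)
  fix i j assume "i < dim_row (1\<^sub>m (N * N * N) + w \<cdot>\<^sub>m op23 N P)" "j < dim_col (1\<^sub>m (N * N * N) + w \<cdot>\<^sub>m op23 N P)"
  then have i: "i < N * N * N" and j: "j < N * N * N" using P unfolding op23_def kron_def by (auto simp: mult.assoc)
  then have N: "N > 0" by (cases N) auto
  have "i < N * (N * N)" "j < N * (N * N)" using i j by (simp_all add: mult.assoc)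
  then have a: "i div (N * N) < N" "j div (N * N) < N"
    by (simp_all add: less_mult_imp_div_less)
  have b: "i mod (N * N) < N * N" "j mod (N * N) < N * N" using N by simp_all
  have e: "(if i div (N * N) = j div (N * N) then 1 else 0) * (if i mod (N * N) = j mod (N * N) then 1 else 0) = (if i = j then 1 else (0::complex))"
    using div_mod_eq_iff[of i "N * N" j] by auto
  show "op23 N (1\<^sub>m (N * N) + w \<cdot>\<^sub>m P) $$ (i, j) = (1\<^sub>m (N * N * N) + w \<cdot>\<^sub>m op23 N P) $$ (i, j)"
    using i j a b N P e unfolding op23_def kron_def by (simp add: algebra_simps mult.assoc)
qed (use P in \<open>simp_all add: op23_def kron_def mult.assoc\<close>)


lemma distr1:
  fixes X Y E :: "complex mat"
  assumes X: "X \<in> carrier_mat n n" and Y: "Y \<in> carrier_mat n n" and E: "E \<in> carrier_mat n n"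
  shows "(X + a \<cdot>\<^sub>m Y) * E = X * E + a \<cdot>\<^sub>m (Y * E)"
proof -
  have "(X + a \<cdot>\<^sub>m Y) * E = X * E + (a \<cdot>\<^sub>m Y) * E"
    by (rule add_mult_distrib_mat[of _ n n]) (use X Y E in auto)
  also have "(a \<cdot>\<^sub>m Y) * E = a \<cdot>\<^sub>m (Y * E)"
    by (rule mult_smult_assoc_mat[of _ n n]) (use Y E in auto)
  finally show ?thesis .
qed

lemma distr2:
  fixes M E :: "complex mat"
  assumes M: "M \<in> carrier_mat n n" and E: "E \<in> carrier_mat n n"
  shows "M * (1\<^sub>m n + c \<cdot>\<^sub>m E) = M + c \<cdot>\<^sub>m (M * E)"
proof -
  have "M * (1\<^sub>m n + c \<cdot>\<^sub>m E) = M * 1\<^sub>m n + M * (c \<cdot>\<^sub>m E)"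
    by (rule mult_add_distrib_mat[of _ n n]) (use M E in auto)
  also have "M * (c \<cdot>\<^sub>m E) = c \<cdot>\<^sub>m (M * E)"
    by (rule mult_smult_distrib[of _ n n]) (use M E in auto)
  finally show ?thesis using M by simp
qed

lemma exp2:
  fixes C D :: "complex mat"
  assumes C: "C \<in> carrier_mat n n" and D: "D \<in> carrier_mat n n"
  shows "(1\<^sub>m n + a \<cdot>\<^sub>m C) * (1\<^sub>m n + b \<cdot>\<^sub>m D) = (1\<^sub>m n + b \<cdot>\<^sub>m D) + a \<cdot>\<^sub>m (C + b \<cdot>\<^sub>m (C * D))"
proof -
  have "(1\<^sub>m n + a \<cdot>\<^sub>m C) * (1\<^sub>m n + b \<cdot>\<^sub>m D) = 1\<^sub>m n * (1\<^sub>m n + b \<cdot>\<^sub>m D) + a \<cdot>\<^sub>m (C * (1\<^sub>m n + b \<cdot>\<^sub>m D))"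
    by (rule distr1) (use C D in auto)
  also have "C * (1\<^sub>m n + b \<cdot>\<^sub>m D) = C + b \<cdot>\<^sub>m (C * D)"
    by (rule distr2[OF C D])
  finally show ?thesis using D by simp
qed

lemma exp3:
  fixes C D E :: "complex mat"
  assumes C: "C \<in> carrier_mat n n" and D: "D \<in> carrier_mat n n" and E: "E \<in> carrier_mat n n"
  shows "(1\<^sub>m n + a \<cdot>\<^sub>m C) * (1\<^sub>m n + b \<cdot>\<^sub>m D) * (1\<^sub>m n + c \<cdot>\<^sub>m E)
     = ((1\<^sub>m n + b \<cdot>\<^sub>m D) + a \<cdot>\<^sub>m (C + b \<cdot>\<^sub>m (C * D))) + c \<cdot>\<^sub>m ((E + b \<cdot>\<^sub>m (D * E)) + a \<cdot>\<^sub>m (C * E + b \<cdot>\<^sub>m (C * D * E)))"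
proof -
  have M: "(1\<^sub>m n + b \<cdot>\<^sub>m D) + a \<cdot>\<^sub>m (C + b \<cdot>\<^sub>m (C * D)) \<in> carrier_mat n n" using C D by auto
  have "((1\<^sub>m n + b \<cdot>\<^sub>m D) + a \<cdot>\<^sub>m (C + b \<cdot>\<^sub>m (C * D))) * E
      = (1\<^sub>m n + b \<cdot>\<^sub>m D) * E + a \<cdot>\<^sub>m ((C + b \<cdot>\<^sub>m (C * D)) * E)"
    by (rule distr1) (use C D E in auto)
  also have "(1\<^sub>m n + b \<cdot>\<^sub>m D) * E = 1\<^sub>m n * E + b \<cdot>\<^sub>m (D * E)"
    by (rule distr1) (use C D E in auto)
  also have "(C + b \<cdot>\<^sub>m (C * D)) * E = C * E + b \<cdot>\<^sub>m (C * D * E)"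
    by (rule distr1) (use C D E in auto)
  finally have ME: "((1\<^sub>m n + b \<cdot>\<^sub>m D) + a \<cdot>\<^sub>m (C + b \<cdot>\<^sub>m (C * D))) * E
      = (E + b \<cdot>\<^sub>m (D * E)) + a \<cdot>\<^sub>m (C * E + b \<cdot>\<^sub>m (C * D * E))" using E by simp
  show ?thesis unfolding exp2[OF C D] distr2[OF M E] ME ..
qed

lemma tl_ybe:
  fixes A B :: "complex mat"
  assumes A: "A \<in> carrier_mat n n" and B: "B \<in> carrier_mat n n"
    and AA: "A * A = A" and BB: "B * B = B"
    and ABA: "A * B * A = k \<cdot>\<^sub>m A" and BAB: "B * A * B = k \<cdot>\<^sub>m B"
    and rel: "y * (1 - k * x * z) = x + z + x * z"
  shows "(1\<^sub>m n + x \<cdot>\<^sub>m A) * (1\<^sub>m n + y \<cdot>\<^sub>m B) * (1\<^sub>m n + z \<cdot>\<^sub>m A)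
       = (1\<^sub>m n + z \<cdot>\<^sub>m B) * (1\<^sub>m n + y \<cdot>\<^sub>m A) * (1\<^sub>m n + x \<cdot>\<^sub>m B)"
proof -
  have AB: "A * B \<in> carrier_mat n n" and BA: "B * A \<in> carrier_mat n n" using A B by auto
  have sc: "\<And>e a b p q :: complex. (e + y * b + x * (a + y * p)) + z * ((a + y * q) + x * (a + y * (k * a)))
          = (e + y * a + z * (b + y * q)) + x * ((b + y * p) + z * (b + y * (k * b)))"
  proof -
    fix e a b p q :: complex
    have "((e + y * b + x * (a + y * p)) + z * ((a + y * q) + x * (a + y * (k * a))))
          - ((e + y * a + z * (b + y * q)) + x * ((b + y * p) + z * (b + y * (k * b))))
          = ((x + z + x * z) - y * (1 - k * x * z)) * (a - b)"
      by (simp add: algebra_simps)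
    also have "\<dots> = 0" using rel by simp
    finally show "(e + y * b + x * (a + y * p)) + z * ((a + y * q) + x * (a + y * (k * a)))
          = (e + y * a + z * (b + y * q)) + x * ((b + y * p) + z * (b + y * (k * b)))"
      by (simp only: right_minus_eq)
  qed
  show ?thesis unfolding exp3[OF A B A] exp3[OF B A B] AA BB ABA BAB
    apply (rule eq_matI)
    using A B AB BA apply (simp_all only: index_add_mat index_smult_mat index_one_mat carrier_matD)
    using sc by auto
qed

lemma inv_gen:
  fixes A :: "complex mat"
  assumes A: "A \<in> carrier_mat n n" and AA: "A * A = A" and rel: "x + y + x * y = 0"
  shows "(1\<^sub>m n + x \<cdot>\<^sub>m A) * (1\<^sub>m n + y \<cdot>\<^sub>m A) = 1\<^sub>m n"
proof -
  have sc: "\<And>e a :: complex. e + y * a + x * (a + y * a) = e"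
  proof -
    fix e a :: complex
    have "e + y * a + x * (a + y * a) = e + (x + y + x * y) * a" by (simp add: algebra_simps)
    then show "e + y * a + x * (a + y * a) = e" using rel by simp
  qed
  show ?thesis unfolding exp2[OF A A] AA
    apply (rule eq_matI)
    using A apply (simp_all only: index_add_mat index_smult_mat index_one_mat carrier_matD)
    using sc by auto
qed

lemma tl_mats:
  fixes X Y :: "nat \<Rightarrow> nat \<Rightarrow> complex"
  assumes TL1: "\<And>c r. c < N \<Longrightarrow> r < N \<Longrightarrow> (\<Sum>s<N. Y c s * X s r) = of_bool (r = c)"
    and TL2: "\<And>r c. r < N \<Longrightarrow> c < N \<Longrightarrow> (\<Sum>t<N. Y t c * X r t) = of_bool (r = c)"
    and KP: "dl * (\<Sum>a<N. \<Sum>b<N. Y a b * X a b) = 1"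
  shows "op12 N (PF N dl X Y) * op12 N (PF N dl X Y) = op12 N (PF N dl X Y)"
    and "op23 N (PF N dl X Y) * op23 N (PF N dl X Y) = op23 N (PF N dl X Y)"
    and "op12 N (PF N dl X Y) * op23 N (PF N dl X Y) * op12 N (PF N dl X Y) = dl^2 \<cdot>\<^sub>m op12 N (PF N dl X Y)"
    and "op23 N (PF N dl X Y) * op12 N (PF N dl X Y) * op23 N (PF N dl X Y) = dl^2 \<cdot>\<^sub>m op23 N (PF N dl X Y)"
proof -
  note ts = tl_sums[OF TL1 TL2 KP]
  show "op12 N (PF N dl X Y) * op12 N (PF N dl X Y) = op12 N (PF N dl X Y)"
    unfolding op12_PF M3_mult by (rule M3_cong) (rule ts(1))
  show "op23 N (PF N dl X Y) * op23 N (PF N dl X Y) = op23 N (PF N dl X Y)"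
    unfolding op23_PF M3_mult by (rule M3_cong) (rule ts(2))
  have AB: "op12 N (PF N dl X Y) * op23 N (PF N dl X Y) = M3 N (\<lambda>r1 r2 r3 c1 c2 c3. dl^2 * X r1 r2 * Y c2 c3 * of_bool (r3 = c1))"
    unfolding op12_PF op23_PF M3_mult by (rule M3_cong) (rule ts(3))
  show "op12 N (PF N dl X Y) * op23 N (PF N dl X Y) * op12 N (PF N dl X Y) = dl^2 \<cdot>\<^sub>m op12 N (PF N dl X Y)"
    unfolding AB unfolding op12_PF M3_mult M3_smult by (rule M3_cong) (rule ts(4))
  have BA: "op23 N (PF N dl X Y) * op12 N (PF N dl X Y) = M3 N (\<lambda>r1 r2 r3 c1 c2 c3. dl^2 * X r2 r3 * Y c1 c2 * of_bool (r1 = c3))"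
    unfolding op12_PF op23_PF M3_mult by (rule M3_cong) (rule ts(5))
  show "op23 N (PF N dl X Y) * op12 N (PF N dl X Y) * op23 N (PF N dl X Y) = dl^2 \<cdot>\<^sub>m op23 N (PF N dl X Y)"
    unfolding BA unfolding op23_PF M3_mult M3_smult by (rule M3_cong) (rule ts(6))
qed

lemma PF_idem:
  fixes X Y :: "nat \<Rightarrow> nat \<Rightarrow> complex"
  assumes KP: "dl * (\<Sum>a<N. \<Sum>b<N. Y a b * X a b) = 1"
  shows "PF N dl X Y * PF N dl X Y = PF N dl X Y"
proof (rule eq_matI)
  fix i j assume "i < dim_row (PF N dl X Y)" "j < dim_col (PF N dl X Y)"
  then have i: "i < N * N" and j: "j < N * N" unfolding PF_dim by auto
  have "(PF N dl X Y * PF N dl X Y) $$ (i, j) = (\<Sum>k<N * N. PF N dl X Y $$ (i, k) * PF N dl X Y $$ (k, j))"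
    using i j unfolding PF_def by (simp add: scalar_prod_def lessThan_atLeast0)
  also have "\<dots> = (\<Sum>a<N. \<Sum>b<N. PF N dl X Y $$ (i, a * N + b) * PF N dl X Y $$ (a * N + b, j))"
    by (rule sum2)
  also have "\<dots> = (\<Sum>a<N. \<Sum>b<N. (dl * X (i div N) (i mod N) * Y (j div N) (j mod N)) * (dl * (Y a b * X a b)))"
  proof (intro sum.cong refl)
    fix a b assume ab: "a \<in> {..<N}" "b \<in> {..<N}"
    have k: "a * N + b < N * N"
    proof -
      have "a * N + b < a * N + N" using ab by simp
      also have "\<dots> = (a + 1) * N" by simp
      also have "\<dots> \<le> N * N" using ab by (intro mult_right_mono) auto
      finally show ?thesis .
    qed
    show "PF N dl X Y $$ (i, a * N + b) * PF N dl X Y $$ (a * N + b, j) = (dl * X (i div N) (i mod N) * Y (j div N) (j mod N)) * (dl * (Y a b * X a b))"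
    proof -
      have b: "b < N" using ab by simp
      show ?thesis
        by (simp only: PF_index[OF i k] PF_index[OF k j] enc_div[OF b] enc_mod[OF b]) (simp add: mult_ac)
    qed
  qed
  also have "\<dots> = dl * X (i div N) (i mod N) * Y (j div N) (j mod N)"
    by (simp add: sum_distrib_left[symmetric] sum_distrib_right[symmetric] KP)
  also have "\<dots> = PF N dl X Y $$ (i, j)" by (simp add: PF_index[OF i j])
  finally show "(PF N dl X Y * PF N dl X Y) $$ (i, j) = PF N dl X Y $$ (i, j)" .
qed (simp_all add: PF_dim)


lemma sinh_mul: "sinh (x::real) * (2 * exp y) = exp (x + y) - exp (y - x)"
proof -
  have "sinh x * (2 * exp y) = (exp x - exp (-x)) * exp y" by (simp add: sinh_def)
  also have "\<dots> = exp x * exp y - exp (-x) * exp y" by (rule left_diff_distrib)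
  also have "exp x * exp y = exp (x + y)" by (rule exp_add[symmetric])
  also have "exp (-x) * exp y = exp (-x + y)" by (rule exp_add[symmetric])
  also have "-x + y = y - x" by simp
  finally show ?thesis .
qed

lemma wfun_exp:
  fixes \<eta> \<theta> :: real
  assumes "\<eta> + \<theta> \<noteq> 0"
  shows "sinh (\<eta> - \<theta>) / sinh (\<eta> + \<theta>) - 1
     = (exp (2*\<eta>) + 1) * (1 - exp (2*\<theta>)) / (exp (2*\<eta>) * exp (2*\<theta>) - 1)"
proof -
  have a: "sinh (\<eta> - \<theta>) * (2 * exp (\<eta> + \<theta>)) = exp (2*\<eta>) - exp (2*\<theta>)"
  proof -
    have e1: "(\<eta> - \<theta>) + (\<eta> + \<theta>) = 2*\<eta>" "(\<eta> + \<theta>) - (\<eta> - \<theta>) = 2*\<theta>" by simp_all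
    show ?thesis using sinh_mul[of "\<eta> - \<theta>" "\<eta> + \<theta>"] unfolding e1 .
  qed
  have b: "sinh (\<eta> + \<theta>) * (2 * exp (\<eta> + \<theta>)) = exp (2*\<eta>) * exp (2*\<theta>) - 1"
  proof -
    have e1: "(\<eta> + \<theta>) + (\<eta> + \<theta>) = 2*\<eta> + 2*\<theta>" "(\<eta> + \<theta>) - (\<eta> + \<theta>) = 0" by simp_all
    show ?thesis using sinh_mul[of "\<eta> + \<theta>" "\<eta> + \<theta>"] unfolding e1 exp_add exp_zero .
  qed
  have nz: "exp (2*\<eta>) * exp (2*\<theta>) \<noteq> 1"
    using assms by (simp add: exp_add[symmetric])
  define E where "E = 2 * exp (\<eta> + \<theta>)"
  have E0: "E \<noteq> 0" unfolding E_def by simp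
  define A where "A = exp (2*\<eta>) - exp (2*\<theta>)"
  define B where "B = exp (2*\<eta>) * exp (2*\<theta>) - 1"
  have B0: "B \<noteq> 0" unfolding B_def using nz by simp
  have a': "sinh (\<eta> - \<theta>) = A / E" using a E0 unfolding A_def E_def[symmetric] by (simp add: eq_divide_eq)
  have b': "sinh (\<eta> + \<theta>) = B / E" using b E0 unfolding B_def E_def[symmetric] by (simp add: eq_divide_eq)
  have "sinh (\<eta> - \<theta>) / sinh (\<eta> + \<theta>) - 1 = A / B - B / B" unfolding a' b' using E0 B0 by simp
  also have "\<dots> = (A - B) / B" by (rule diff_divide_distrib[symmetric])
  also have "A - B = (exp (2*\<eta>) + 1) * (1 - exp (2*\<theta>))" unfolding A_def B_def by (simp add: algebra_simps)
  finally show ?thesis unfolding B_def .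
qed

lemma key_aux:
  fixes X U V a b c :: real
  assumes a: "a = X * U - 1" "a \<noteq> 0" and b: "b = X * V - 1" "b \<noteq> 0"
    and c: "c = X * (U * V) - 1" "c \<noteq> 0" and X1: "X - 1 \<noteq> 0" and X2: "X + 1 \<noteq> 0"
  shows "1 - X / (X + 1)^2 * ((X + 1) * (1 - U) / a) * ((X + 1) * (1 - V) / b) = (X - 1) * c / (a * b)"
    and "(X + 1) * (1 - U) / a + (X + 1) * (1 - V) / b + ((X + 1) * (1 - U) / a) * ((X + 1) * (1 - V) / b)
         = (X * X - 1) * (1 - U * V) / (a * b)"
    and "(X + 1) * (1 - U * V) / c * ((X - 1) * c / (a * b)) = (X * X - 1) * (1 - U * V) / (a * b)"
proof -
  have "X / (X + 1)^2 * ((X + 1) * (1 - U) / a) * ((X + 1) * (1 - V) / b) = X * (1 - U) * (1 - V) / (a * b)"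
    using a b X2 by (simp add: power2_eq_square)
  then have "1 - X / (X + 1)^2 * ((X + 1) * (1 - U) / a) * ((X + 1) * (1 - V) / b) = (a * b - X * (1 - U) * (1 - V)) / (a * b)"
    using a b by (simp add: diff_divide_distrib)
  also have "a * b - X * (1 - U) * (1 - V) = (X - 1) * c" unfolding a b c by (simp add: algebra_simps)
  finally show "1 - X / (X + 1)^2 * ((X + 1) * (1 - U) / a) * ((X + 1) * (1 - V) / b) = (X - 1) * c / (a * b)" .
  have "(X + 1) * (1 - U) / a + (X + 1) * (1 - V) / b + ((X + 1) * (1 - U) / a) * ((X + 1) * (1 - V) / b)
       = ((X + 1) * (1 - U) * b + (X + 1) * (1 - V) * a + (X + 1) * (1 - U) * ((X + 1) * (1 - V))) / (a * b)"
    using a b by (simp add: field_simps)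
  also have "(X + 1) * (1 - U) * b + (X + 1) * (1 - V) * a + (X + 1) * (1 - U) * ((X + 1) * (1 - V)) = (X * X - 1) * (1 - U * V)"
    unfolding a b by (simp add: algebra_simps)
  finally show "(X + 1) * (1 - U) / a + (X + 1) * (1 - V) / b + ((X + 1) * (1 - U) / a) * ((X + 1) * (1 - V) / b)
         = (X * X - 1) * (1 - U * V) / (a * b)" .
  show "(X + 1) * (1 - U * V) / c * ((X - 1) * c / (a * b)) = (X * X - 1) * (1 - U * V) / (a * b)"
    using a b c by (simp add: field_simps)
qed

lemma key_rel:
  fixes X U V D :: real
  assumes X: "X > 0" "X \<noteq> 1"
    and XU: "X * U \<noteq> 1" and XV: "X * V \<noteq> 1" and XUV: "X * (U * V) \<noteq> 1"
    and D: "D = X / (X + 1)^2"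
  defines "F \<equiv> \<lambda>t. (X + 1) * (1 - t) / (X * t - 1)"
  shows "1 - D * F U * F V \<noteq> 0"
    and "F (U * V) * (1 - D * F U * F V) = F U + F V + F U * F V"
    and "F (U * V) = (F U + F V + F U * F V) / (1 - D * F U * F V)"
proof -
  note k = key_aux[of "X * U - 1" X U "X * V - 1" V "X * (U * V) - 1"]
  have d1: "X * U - 1 \<noteq> 0" "X * V - 1 \<noteq> 0" "X * (U * V) - 1 \<noteq> 0" "X - 1 \<noteq> 0" "X + 1 \<noteq> 0"
    using assms by auto
  have e1: "1 - D * F U * F V = (X - 1) * (X * (U * V) - 1) / ((X * U - 1) * (X * V - 1))"
    unfolding F_def D using k(1) d1 by (simp add: mult.assoc)
  show nz: "1 - D * F U * F V \<noteq> 0" unfolding e1 using d1 by simp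
  show eq: "F (U * V) * (1 - D * F U * F V) = F U + F V + F U * F V"
    unfolding e1 unfolding F_def using k(2,3) d1 by simp
  show "F (U * V) = (F U + F V + F U * F V) / (1 - D * F U * F V)"
    using eq nz by (simp add: field_simps)
qed


lemma wfun_F:
  assumes "\<eta> + \<theta> \<noteq> 0"
  shows "wfun \<eta> \<theta> = (exp (2*\<eta>) + 1) * (1 - exp (2*\<theta>)) / (exp (2*\<eta>) * exp (2*\<theta>) - 1)"
  unfolding wfun_def by (rule wfun_exp[OF assms])

lemma d2_val:
  fixes d \<eta> :: real
  assumes d1: "0 < 1 - 4 * d^2" and eta: "tanh \<eta> = sqrt (1 - 4 * d^2)"
  shows "d^2 = exp (2*\<eta>) / (exp (2*\<eta>) + 1)^2"
proof -
  define X where "X = exp (2*\<eta>)"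
  have X0: "X > 0" unfolding X_def by simp
  have em: "exp (- 2 * \<eta>) = 1 / X" unfolding X_def by (simp add: exp_minus field_simps)
  have u1: "1 - 1 / X = (X - 1) / X" using X0 by (simp add: diff_divide_distrib)
  have u2: "1 + 1 / X = (X + 1) / X" using X0 by (simp add: add_divide_distrib)
  have th: "tanh \<eta> = (X - 1) / (X + 1)"
    unfolding tanh_real_altdef em u1 u2 using X0 by simp
  have "(tanh \<eta>)^2 = 1 - 4 * d^2" unfolding eta using d1 by simp
  then have "((X - 1) / (X + 1))^2 = 1 - 4 * d^2" unfolding th .
  then have "4 * d^2 = 1 - ((X - 1) / (X + 1))^2" by simp
  also have "\<dots> = ((X + 1)^2 - (X - 1)^2) / (X + 1)^2"
  proof -
    have p: "(X + 1)^2 \<noteq> 0" using X0 by simp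
    have "((X + 1)^2 - (X - 1)^2) / (X + 1)^2 = 1 - (X - 1)^2 / (X + 1)^2"
      by (simp only: diff_divide_distrib divide_self[OF p])
    then show ?thesis by (simp only: power_divide)
  qed
  also have "(X + 1)^2 - (X - 1)^2 = 4 * X" by (simp add: power2_eq_square algebra_simps)
  also have "4 * X / (X + 1)^2 = 4 * (X / (X + 1)^2)" by simp
  finally show ?thesis unfolding X_def by simp
qed

lemma inv_rel:
  fixes X U :: real
  assumes X: "X > 0" and U: "U > 0" and XU: "X * U \<noteq> 1" and XU2: "X \<noteq> U"
  shows "(X + 1) * (1 - U) / (X * U - 1) + (X + 1) * (1 - 1 / U) / (X * (1 / U) - 1)
     + ((X + 1) * (1 - U) / (X * U - 1)) * ((X + 1) * (1 - 1 / U) / (X * (1 / U) - 1)) = 0"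
proof -
  define a where "a = X * U - 1"
  define b where "b = X - U"
  have a0: "a \<noteq> 0" and b0: "b \<noteq> 0" using XU XU2 unfolding a_def b_def by auto
  have f2: "(X + 1) * (1 - 1 / U) / (X * (1 / U) - 1) = (X + 1) * (U - 1) / b"
  proof -
    have "X * (1 / U) - 1 = b / U" unfolding b_def using U by (simp add: field_simps)
    moreover have "1 - 1 / U = (U - 1) / U" using U by (simp add: field_simps)
    ultimately show ?thesis using U b0 by simp
  qed
  have "(X + 1) * (1 - U) / a + (X + 1) * (U - 1) / b + ((X + 1) * (1 - U) / a) * ((X + 1) * (U - 1) / b)
      = (X + 1) * (1 - U) * (b - a - (X + 1) * (1 - U)) / (a * b)"
    using a0 b0 by (simp add: field_simps)
  also have "b - a - (X + 1) * (1 - U) = 0" unfolding a_def b_def by (simp add: algebra_simps)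
  finally show ?thesis unfolding f2 a_def[symmetric] by simp
qed

theorem mainTheorem7:
  fixes eps :: int and N :: nat and q \<eta> :: real
  assumes eps: "eps = 1 \<or> eps = -1"
    and N2: "N \<ge> 2"
    and Neven: "eps = -1 \<Longrightarrow> even N"
    and qpos: "q > 0"
    and dnz: "1 + real_of_int eps * qnum q (real N - real_of_int eps) \<noteq> 0"
    and d1: "0 < 1 - 4 * (dcoef eps N q)\<^sup>2" and d2: "1 - 4 * (dcoef eps N q)\<^sup>2 < 1"
    and etapos: "\<eta> > 0"
    and eta: "tanh \<eta> = sqrt (1 - 4 * (dcoef eps N q)\<^sup>2)"
  shows "(\<forall>\<theta> \<theta>'. \<eta> + \<theta> \<noteq> 0 \<and> \<eta> + \<theta>' \<noteq> 0 \<and> \<eta> + \<theta> + \<theta>' \<noteq> 0 \<longrightarrow>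
            op12 N (Rhat eps N q \<eta> \<theta>) * op23 N (Rhat eps N q \<eta> (\<theta> + \<theta>')) * op12 N (Rhat eps N q \<eta> \<theta>')
          = op23 N (Rhat eps N q \<eta> \<theta>') * op12 N (Rhat eps N q \<eta> (\<theta> + \<theta>')) * op23 N (Rhat eps N q \<eta> \<theta>))
       \<and> (\<forall>\<theta>. \<eta> + \<theta> \<noteq> 0 \<and> \<eta> - \<theta> \<noteq> 0 \<longrightarrow>
            Rhat eps N q \<eta> \<theta> * Rhat eps N q \<eta> (-\<theta>) = 1\<^sub>m (N * N))
       \<and> (\<forall>\<theta> \<theta>'. \<eta> + \<theta> \<noteq> 0 \<and> \<eta> + \<theta>' \<noteq> 0 \<and> \<eta> + \<theta> + \<theta>' \<noteq> 0 \<longrightarrow>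
            wfun \<eta> (\<theta> + \<theta>') = (wfun \<eta> \<theta> + wfun \<eta> \<theta>' + wfun \<eta> \<theta> * wfun \<eta> \<theta>')
               / (1 - (dcoef eps N q)\<^sup>2 * wfun \<eta> \<theta> * wfun \<eta> \<theta>'))"
proof -
  define d where "d = dcoef eps N q"
  define dl where "dl = complex_of_real d"
  define XA where "XA = exp (2 * \<eta>)"
  have N0: "N > 0" using N2 by simp
  have XA0: "XA > 0" unfolding XA_def by simp
  have XA1: "XA \<noteq> 1" unfolding XA_def using etapos by simp
  have D: "d^2 = XA / (XA + 1)^2" unfolding d_def XA_def by (rule d2_val[OF d1 eta])
  have expne: "exp (2 * \<eta>) * exp (2 * t) \<noteq> 1" if "\<eta> + t \<noteq> 0" for t
    using that by (simp add: exp_add[symmetric])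
  have wrel: "wfun \<eta> (\<theta> + \<theta>') * (1 - d^2 * wfun \<eta> \<theta> * wfun \<eta> \<theta>') = wfun \<eta> \<theta> + wfun \<eta> \<theta>' + wfun \<eta> \<theta> * wfun \<eta> \<theta>'
      \<and> wfun \<eta> (\<theta> + \<theta>') = (wfun \<eta> \<theta> + wfun \<eta> \<theta>' + wfun \<eta> \<theta> * wfun \<eta> \<theta>') / (1 - d^2 * wfun \<eta> \<theta> * wfun \<eta> \<theta>')"
    if h: "\<eta> + \<theta> \<noteq> 0" "\<eta> + \<theta>' \<noteq> 0" "\<eta> + \<theta> + \<theta>' \<noteq> 0" for \<theta> \<theta>'
  proof -
    define U where "U = exp (2 * \<theta>)"
    define V where "V = exp (2 * \<theta>')"
    have UV: "exp (2 * (\<theta> + \<theta>')) = U * V" unfolding U_def V_def by (simp add: exp_add[symmetric] algebra_simps)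
    have c1: "XA * U \<noteq> 1" unfolding XA_def U_def using expne[OF h(1)] .
    have c2: "XA * V \<noteq> 1" unfolding XA_def V_def using expne[OF h(2)] .
    have c3: "XA * (U * V) \<noteq> 1" unfolding XA_def UV[symmetric] using expne[of "\<theta> + \<theta>'"] h(3) by (simp add: add.assoc)
    have w1: "wfun \<eta> \<theta> = (XA + 1) * (1 - U) / (XA * U - 1)" unfolding XA_def U_def by (rule wfun_F[OF h(1)])
    have w2: "wfun \<eta> \<theta>' = (XA + 1) * (1 - V) / (XA * V - 1)" unfolding XA_def V_def by (rule wfun_F[OF h(2)])
    have w3: "wfun \<eta> (\<theta> + \<theta>') = (XA + 1) * (1 - U * V) / (XA * (U * V) - 1)"
      unfolding XA_def UV[symmetric] using wfun_F[of \<eta> "\<theta> + \<theta>'"] h(3) by (simp add: add.assoc)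
    note kr = key_rel[OF XA0 XA1 c1 c2 c3 D]
    show ?thesis unfolding w1 w2 w3 using kr(2,3) by simp
  qed
  have winv: "wfun \<eta> \<theta> + wfun \<eta> (-\<theta>) + wfun \<eta> \<theta> * wfun \<eta> (-\<theta>) = 0"
    if h: "\<eta> + \<theta> \<noteq> 0" "\<eta> - \<theta> \<noteq> 0" for \<theta>
  proof -
    define U where "U = exp (2 * \<theta>)"
    have U0: "U > 0" unfolding U_def by simp
    have c1: "XA * U \<noteq> 1" unfolding XA_def U_def using expne[OF h(1)] .
    have c2: "XA \<noteq> U" unfolding XA_def U_def using h(2) by simp
    have w1: "wfun \<eta> \<theta> = (XA + 1) * (1 - U) / (XA * U - 1)" unfolding XA_def U_def by (rule wfun_F[OF h(1)])
    have em: "exp (2 * - \<theta>) = 1 / U" unfolding U_def by (simp add: exp_minus field_simps)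
    have w2: "wfun \<eta> (-\<theta>) = (XA + 1) * (1 - 1 / U) / (XA * (1 / U) - 1)"
      unfolding XA_def em[symmetric] by (rule wfun_F) (use h(2) in simp)
    show ?thesis unfolding w1 w2 by (rule inv_rel[OF XA0 U0 c1 c2])
  qed
  define X where "X = XX eps N q"
  define Y where "Y = YY eps N q"
  have dnz2: "d * (1 + real_of_int eps * qnum q (real N - real_of_int eps)) = 1"
    unfolding d_def dcoef_def using dnz by simp
  have KP: "dl * (\<Sum>a<N. \<Sum>b<N. Y a b * X a b) = 1"
  proof -
    have "(\<Sum>a<N. \<Sum>b<N. Y a b * X a b) = complex_of_real (1 + real_of_int eps * qnum q (real N - real_of_int eps))"
      using KP_sum[OF qpos N0, of eps] qdim_all[OF qpos eps Neven] unfolding X_def Y_def by simp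
    then show ?thesis unfolding dl_def using dnz2 by (metis of_real_1 of_real_mult)
  qed
  note TL1 = TL1_XY[OF qpos N0, where eps=eps, folded X_def Y_def]
  note TL2 = TL2_XY[OF qpos N0, where eps=eps, folded X_def Y_def]
  have P: "P0 eps N q = PF N dl X Y" unfolding P0_PF dl_def d_def X_def Y_def ..
  have Pc: "P0 eps N q \<in> carrier_mat (N * N) (N * N)" unfolding P by (rule PF_carrier)
  have PP: "P0 eps N q * P0 eps N q = P0 eps N q" unfolding P by (rule PF_idem[OF KP])
  note tm = tl_mats[OF TL1 TL2 KP, folded P]
  have Ac: "op12 N (P0 eps N q) \<in> carrier_mat (N * N * N) (N * N * N)" unfolding P op12_PF by (rule M3_carrier)
  have Bc: "op23 N (P0 eps N q) \<in> carrier_mat (N * N * N) (N * N * N)" unfolding P op23_PF by (rule M3_carrier)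
  have R12: "op12 N (Rhat eps N q \<eta> t) = 1\<^sub>m (N * N * N) + complex_of_real (wfun \<eta> t) \<cdot>\<^sub>m op12 N (P0 eps N q)" for t
    unfolding Rhat_def by (rule op12_R[OF Pc])
  have R23: "op23 N (Rhat eps N q \<eta> t) = 1\<^sub>m (N * N * N) + complex_of_real (wfun \<eta> t) \<cdot>\<^sub>m op23 N (P0 eps N q)" for t
    unfolding Rhat_def by (rule op23_R[OF Pc])
  show ?thesis
  proof (intro conjI allI impI)
    fix \<theta> \<theta>' assume h: "\<eta> + \<theta> \<noteq> 0 \<and> \<eta> + \<theta>' \<noteq> 0 \<and> \<eta> + \<theta> + \<theta>' \<noteq> 0"
    have r: "wfun \<eta> (\<theta> + \<theta>') * (1 - d^2 * wfun \<eta> \<theta> * wfun \<eta> \<theta>') = wfun \<eta> \<theta> + wfun \<eta> \<theta>' + wfun \<eta> \<theta> * wfun \<eta> \<theta>'"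
      using wrel h by blast
    have rc: "complex_of_real (wfun \<eta> (\<theta> + \<theta>')) * (1 - dl^2 * complex_of_real (wfun \<eta> \<theta>) * complex_of_real (wfun \<eta> \<theta>'))
       = complex_of_real (wfun \<eta> \<theta>) + complex_of_real (wfun \<eta> \<theta>') + complex_of_real (wfun \<eta> \<theta>) * complex_of_real (wfun \<eta> \<theta>')"
      unfolding dl_def using arg_cong[OF r, of complex_of_real] by simp
    show "op12 N (Rhat eps N q \<eta> \<theta>) * op23 N (Rhat eps N q \<eta> (\<theta> + \<theta>')) * op12 N (Rhat eps N q \<eta> \<theta>')
          = op23 N (Rhat eps N q \<eta> \<theta>') * op12 N (Rhat eps N q \<eta> (\<theta> + \<theta>')) * op23 N (Rhat eps N q \<eta> \<theta>)"
      unfolding R12 R23 by (rule tl_ybe[OF Ac Bc tm(1) tm(2) tm(3) tm(4) rc])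
  next
    fix \<theta> assume h: "\<eta> + \<theta> \<noteq> 0 \<and> \<eta> - \<theta> \<noteq> 0"
    have r: "wfun \<eta> \<theta> + wfun \<eta> (-\<theta>) + wfun \<eta> \<theta> * wfun \<eta> (-\<theta>) = 0" using winv h by blast
    have rc: "complex_of_real (wfun \<eta> \<theta>) + complex_of_real (wfun \<eta> (-\<theta>)) + complex_of_real (wfun \<eta> \<theta>) * complex_of_real (wfun \<eta> (-\<theta>)) = 0"
      using arg_cong[OF r, of complex_of_real] by simp
    show "Rhat eps N q \<eta> \<theta> * Rhat eps N q \<eta> (-\<theta>) = 1\<^sub>m (N * N)"
      unfolding Rhat_def by (rule inv_gen[OF Pc PP rc])
  next
    fix \<theta> \<theta>' assume h: "\<eta> + \<theta> \<noteq> 0 \<and> \<eta> + \<theta>' \<noteq> 0 \<and> \<eta> + \<theta> + \<theta>' \<noteq> 0"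
    show "wfun \<eta> (\<theta> + \<theta>') = (wfun \<eta> \<theta> + wfun \<eta> \<theta>' + wfun \<eta> \<theta> * wfun \<eta> \<theta>')
               / (1 - (dcoef eps N q)\<^sup>2 * wfun \<eta> \<theta> * wfun \<eta> \<theta>')"
      using wrel h unfolding d_def by blast
  qed
qed


end
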